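(* Let $f=\frac1n\sum_{i=1}^n f_i$ where each $f_i:\mathbb{R}^d\to\mathbb{R}$ is $L$-smooth, and assume moreover that either each $f_i$ is $\mu$-strongly convex for some $\mu>0$, or $\inf_x f(x)>-\infty$. Let the stepsize satisfy $\gamma\le\frac1{2Ln}$. Then the iterates of No Full Grad SVRG (described in the context) satisfy, for every epoch $s\ge1$, $$\Big\|\nabla f(\omega_s)-\frac1n\sum_{t=0}^{n-1}v_s^t\Big\|^2\le 8\gamma^2L^2n^2\|v_s\|^2+32\gamma^2L^2n^2\|v_{s-1}\|^2.$$
   Context: No Full Grad SVRG: input $x_0^0\in\mathbb{R}^d$, $\omega_0=x_0^0$, $\tilde v_0^0=0$, $v_0=0$, stepsize $\gamma>0$. For epochs $s=0,1,\dots$: choose a permutation $\pi_s^0,\dots,\pi_s^{n-1}$ of the $n$ component indices (by any shuffling rule); for $t=0,\dots,n-1$ set $\tilde v_s^{t+1}=\frac{t}{t+1}\tilde v_s^t+\frac1{t+1}\nabla f_{\pi_s^t}(x_s^t)$, $v_s^t=\nabla f_{\pi_s^t}(x_s^t)-\nabla f_{\pi_s^t}(\omega_s)+v_s$, $x_s^{t+1}=x_s^t-\gamma v_s^t$; then $x_{s+1}^0=x_s^n$, $\omega_{s+1}=x_s^n$, $\tilde v_{s+1}^0=0$, $v_{s+1}=\tilde v_s^n$. *)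

theory Defs
  imports "HOL-Analysis.Analysis"
begin

definition grad :: "('a::euclidean_space \<Rightarrow> real) \<Rightarrow> 'a \<Rightarrow> 'a" where
  "grad f x = (THE D. GDERIV f x :> D)"

definition L_smooth :: "real \<Rightarrow> ('a::euclidean_space \<Rightarrow> real) \<Rightarrow> bool" where
  "L_smooth L f \<longleftrightarrow> (\<forall>x. \<exists>D. GDERIV f x :> D) \<and>
     (\<forall>x y. norm (grad f x - grad f y) \<le> L * norm (x - y))"

definition strongly_convex :: "real \<Rightarrow> ('a::euclidean_space \<Rightarrow> real) \<Rightarrow> bool" where
  "strongly_convex \<mu> f \<longleftrightarrow> convex_on UNIV (\<lambda>x. f x - \<mu> / 2 * (norm x)\<^sup>2)"

text \<open>The iterates of No Full Grad SVRG, with components indexed 0..n-1.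
  x s t = x_s^t, w s = omega_s, vt s t = tilde v_s^t, V s = v_s, vst s t = v_s^t,
  \<pi> s = the permutation used in epoch s.\<close>
definition nfg_svrg ::
  "nat \<Rightarrow> (nat \<Rightarrow> 'a::euclidean_space \<Rightarrow> real) \<Rightarrow> real \<Rightarrow> (nat \<Rightarrow> nat \<Rightarrow> nat)
   \<Rightarrow> (nat \<Rightarrow> nat \<Rightarrow> 'a) \<Rightarrow> (nat \<Rightarrow> 'a) \<Rightarrow> (nat \<Rightarrow> nat \<Rightarrow> 'a) \<Rightarrow> (nat \<Rightarrow> 'a)
   \<Rightarrow> (nat \<Rightarrow> nat \<Rightarrow> 'a) \<Rightarrow> bool" where
  "nfg_svrg n f \<gamma> \<pi> x w vt V vst \<longleftrightarrow>
     w 0 = x 0 0 \<and> V 0 = 0 \<and>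
     (\<forall>s. \<pi> s permutes {..<n}) \<and>
     (\<forall>s. vt s 0 = 0) \<and>
     (\<forall>s. \<forall>t<n. vt s (Suc t) =
          (real t / real (t + 1)) *\<^sub>R vt s t + (1 / real (t + 1)) *\<^sub>R grad (f (\<pi> s t)) (x s t)) \<and>
     (\<forall>s. \<forall>t<n. vst s t = grad (f (\<pi> s t)) (x s t) - grad (f (\<pi> s t)) (w s) + V s) \<and>
     (\<forall>s. \<forall>t<n. x s (Suc t) = x s t - \<gamma> *\<^sub>R vst s t) \<and>
     (\<forall>s. x (Suc s) 0 = x s n \<and> w (Suc s) = x s n \<and> V (Suc s) = vt s n)"

end

theory Submission imports Defs "HOL-Combinatorics.Permutations" begin

lemma grad_eqI:
  assumes "GDERIV f x :> D" shows "grad f x = D"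
  unfolding grad_def
proof (rule the_equality)
  show "GDERIV f x :> D" by fact
next
  fix D' assume "GDERIV f x :> D'"
  hence "(\<lambda>h. inner h D') = (\<lambda>h. inner h D)"
    using assms unfolding gderiv_def by (rule has_derivative_unique)
  hence "inner (D' - D) D' = inner (D' - D) D" by metis
  hence "inner (D' - D) (D' - D) = 0" by (simp add: inner_diff_right)
  thus "D' = D" by simp
qed

lemma gderiv_sum:
  assumes "\<And>i. i \<in> A \<Longrightarrow> GDERIV (f i) x :> D i"
  shows "GDERIV (\<lambda>z. \<Sum>i\<in>A. f i z) x :> (\<Sum>i\<in>A. D i)"
proof -
  have "((\<lambda>z. \<Sum>i\<in>A. f i z) has_derivative (\<lambda>h. \<Sum>i\<in>A. inner h (D i))) (at x)"
    using assms unfolding gderiv_def by (intro has_derivative_sum) auto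
  thus ?thesis unfolding gderiv_def by (simp add: inner_sum_right)
qed

lemma grad_avg:
  assumes "\<forall>i<n. L_smooth L (f i)"
  shows "grad (\<lambda>z. (1 / real n) * (\<Sum>i<n. f i z)) y = (1 / real n) *\<^sub>R (\<Sum>i<n. grad (f i) y)"
proof -
  have "\<And>i. i < n \<Longrightarrow> GDERIV (f i) y :> grad (f i) y"
  proof -
    fix i assume "i < n"
    then obtain D where D: "GDERIV (f i) y :> D" using assms unfolding L_smooth_def by blast
    thus "GDERIV (f i) y :> grad (f i) y" using grad_eqI[OF D] by simp
  qed
  hence "GDERIV (\<lambda>z. \<Sum>i<n. f i z) y :> (\<Sum>i<n. grad (f i) y)"
    by (intro gderiv_sum) auto
  hence "GDERIV (\<lambda>z. (1 / real n) * (\<Sum>i<n. f i z)) y :> (1 / real n) *\<^sub>R (\<Sum>i<n. grad (f i) y) + (\<Sum>i<n. f i y) *\<^sub>R 0"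
    by (intro GDERIV_mult GDERIV_const)
  thus ?thesis by (intro grad_eqI) simp
qed

theorem lemma2:
  fixes n :: nat and f :: "nat \<Rightarrow> 'a::euclidean_space \<Rightarrow> real" and L \<gamma> :: real
    and \<pi> :: "nat \<Rightarrow> nat \<Rightarrow> nat"
    and x vt vst :: "nat \<Rightarrow> nat \<Rightarrow> 'a" and w V :: "nat \<Rightarrow> 'a"
  assumes n: "n \<ge> 1"
    and L: "L > 0"
    and smooth: "\<forall>i<n. L_smooth L (f i)"
    and conv_or_bdd: "(\<exists>\<mu>>0. \<forall>i<n. strongly_convex \<mu> (f i))
                      \<or> bdd_below (range (\<lambda>z. (1 / real n) * (\<Sum>i<n. f i z)))"
    and \<gamma>: "\<gamma> > 0" "\<gamma> \<le> 1 / (2 * L * real n)"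
    and alg: "nfg_svrg n f \<gamma> \<pi> x w vt V vst"
    and s: "s \<ge> 1"
  shows "(norm (grad (\<lambda>z. (1 / real n) * (\<Sum>i<n. f i z)) (w s)
                 - (1 / real n) *\<^sub>R (\<Sum>t<n. vst s t)))\<^sup>2
         \<le> 8 * \<gamma>\<^sup>2 * L\<^sup>2 * (real n)\<^sup>2 * (norm (V s))\<^sup>2
           + 32 * \<gamma>\<^sup>2 * L\<^sup>2 * (real n)\<^sup>2 * (norm (V (s - 1)))\<^sup>2"
proof -
  define g where "g = (\<lambda>i. grad (f i))"
  have w0: "w 0 = x 0 0" and perm: "\<And>q. \<pi> q permutes {..<n}"
    and vt0: "\<And>q. vt q 0 = 0"
    and vtS: "\<And>q t. t < n \<Longrightarrow> vt q (Suc t) =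
          (real t / real (t + 1)) *\<^sub>R vt q t + (1 / real (t + 1)) *\<^sub>R g (\<pi> q t) (x q t)"
    and vstd: "\<And>q t. t < n \<Longrightarrow> vst q t = g (\<pi> q t) (x q t) - g (\<pi> q t) (w q) + V q"
    and xS: "\<And>q t. t < n \<Longrightarrow> x q (Suc t) = x q t - \<gamma> *\<^sub>R vst q t"
    and nxt: "\<And>q. x (Suc q) 0 = x q n \<and> w (Suc q) = x q n \<and> V (Suc q) = vt q n"
    using alg unfolding nfg_svrg_def g_def by auto
  have wx: "w q = x q 0" for q by (cases q) (use w0 nxt in auto)
  have lip: "norm (g i y - g i z) \<le> L * norm (y - z)" if "i < n" for i y z
    using smooth that unfolding L_smooth_def g_def by blast
  have pin: "\<pi> q t < n" if "t < n" for q t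
    using permutes_in_image[OF perm[of q]] that by auto
  have reidx: "(\<Sum>t<n. g (\<pi> q t) y) = (\<Sum>i<n. g i y)" for q y
    using sum.reindex_bij_betw[OF permutes_imp_bij[OF perm[of q]], of "\<lambda>i. g i y"] by simp
  have Lg: "2 * L * \<gamma> * real n \<le> 1"
    using \<gamma> L n by (simp add: field_simps)
  have bnd: "norm (x q t - w q) \<le> 2 * \<gamma> * real t * norm (V q)" if "t \<le> n" for q t
    using that
  proof (induction t)
    case 0 thus ?case by (simp add: wx)
  next
    case (Suc t)
    hence tn: "t < n" and IH: "norm (x q t - w q) \<le> 2 * \<gamma> * real t * norm (V q)" by auto
    have "norm (vst q t) \<le> norm (g (\<pi> q t) (x q t) - g (\<pi> q t) (w q)) + norm (V q)"
      using vstd[OF tn] norm_triangle_ineq by metis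
    also have "\<dots> \<le> L * norm (x q t - w q) + norm (V q)"
      using lip[OF pin[OF tn]] by simp
    also have "\<dots> \<le> L * (2 * \<gamma> * real t * norm (V q)) + norm (V q)"
      using IH L by (simp add: mult_left_mono)
    also have "\<dots> \<le> 2 * norm (V q)"
    proof -
      have "2 * L * \<gamma> * real t \<le> 1" using Lg tn L \<gamma>
        by (smt (verit) mult_left_mono of_nat_less_iff zero_le_mult_iff)
      hence "(2 * L * \<gamma> * real t) * norm (V q) \<le> norm (V q)"
        using mult_right_mono[of "2 * L * \<gamma> * real t" 1 "norm (V q)"] by simp
      thus ?thesis by (simp add: algebra_simps)
    qed
    finally have vb: "norm (vst q t) \<le> 2 * norm (V q)" .
    have "norm (x q (Suc t) - w q) = norm ((x q t - w q) - \<gamma> *\<^sub>R vst q t)"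
      using xS[OF tn, of q] by (simp add: diff_diff_eq add.commute)
    also have "\<dots> \<le> norm (x q t - w q) + \<gamma> * norm (vst q t)"
      using norm_triangle_ineq4 \<gamma> by (metis abs_of_pos norm_scaleR)
    also have "\<dots> \<le> 2 * \<gamma> * real t * norm (V q) + \<gamma> * (2 * norm (V q))"
      using IH vb \<gamma> by (intro add_mono mult_left_mono) auto
    also have "\<dots> = 2 * \<gamma> * real (Suc t) * norm (V q)" by (simp add: algebra_simps)
    finally show ?case .
  qed
  have bndn: "norm (x q t - w q) \<le> 2 * \<gamma> * real n * norm (V q)" if "t \<le> n" for q t
  proof -
    have "2 * \<gamma> * real t * norm (V q) \<le> 2 * \<gamma> * real n * norm (V q)"
      using that \<gamma> by (intro mult_right_mono) auto
    thus ?thesis using bnd[of t q] that by linarith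
  qed
  have vtf: "real t *\<^sub>R vt q t = (\<Sum>k<t. g (\<pi> q k) (x q k))" if "t \<le> n" for q t
    using that
  proof (induction t)
    case 0 thus ?case by (simp add: vt0)
  next
    case (Suc t)
    hence tn: "t < n" by auto
    have "real (Suc t) *\<^sub>R vt q (Suc t) = real t *\<^sub>R vt q t + g (\<pi> q t) (x q t)"
      using vtS[OF tn] by (simp add: scaleR_add_right)
    thus ?case using Suc by simp
  qed
  obtain p where sp: "s = Suc p" using s by (cases s) auto
  have ws: "w s = x p n" using nxt[of p] sp by auto
  have Vs: "V s = (1 / real n) *\<^sub>R (\<Sum>t<n. g (\<pi> p t) (x p t))"
  proof -
    have "V s = vt p n" using nxt[of p] sp by auto
    also have "\<dots> = (1 / real n) *\<^sub>R (real n *\<^sub>R vt p n)" using n by simp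
    also have "\<dots> = (1 / real n) *\<^sub>R (\<Sum>t<n. g (\<pi> p t) (x p t))" using vtf[of n p] by simp
    finally show ?thesis .
  qed
  define a where "a = (1 / real n) *\<^sub>R (\<Sum>t<n. g (\<pi> s t) (w s) - g (\<pi> s t) (x s t))"
  define b where "b = (1 / real n) *\<^sub>R (\<Sum>t<n. g (\<pi> p t) (x p n) - g (\<pi> p t) (x p t))"
  have eq: "grad (\<lambda>z. (1 / real n) * (\<Sum>i<n. f i z)) (w s) - (1 / real n) *\<^sub>R (\<Sum>t<n. vst s t) = a + b"
  proof -
    have A: "grad (\<lambda>z. (1 / real n) * (\<Sum>i<n. f i z)) (w s) = (1 / real n) *\<^sub>R (\<Sum>t<n. g (\<pi> s t) (w s))"
      using grad_avg[OF smooth] reidx unfolding g_def by metis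
    have B: "(\<Sum>t<n. g (\<pi> s t) (w s)) = (\<Sum>t<n. g (\<pi> p t) (x p n))"
      using reidx ws by metis
    have C: "(\<Sum>t<n. vst s t) = (\<Sum>t<n. g (\<pi> s t) (x s t)) - (\<Sum>t<n. g (\<pi> s t) (w s)) + real n *\<^sub>R V s"
      using vstd by (simp add: sum.distrib sum_subtractf sum_constant_scaleR)
    have nz: "real n \<noteq> 0" using n by simp
    show ?thesis unfolding a_def b_def A C Vs sum_subtractf
      using B nz by (simp add: algebra_simps)
  qed
  have na: "norm a \<le> 2 * L * \<gamma> * real n * norm (V s)"
  proof -
    have "norm a = (1 / real n) * norm (\<Sum>t<n. g (\<pi> s t) (w s) - g (\<pi> s t) (x s t))"
      unfolding a_def by simp
    also have "\<dots> \<le> (1 / real n) * (\<Sum>t<n. norm (g (\<pi> s t) (w s) - g (\<pi> s t) (x s t)))"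
      by (intro mult_left_mono norm_sum) auto
    also have "\<dots> \<le> (1 / real n) * (\<Sum>t<n. L * (2 * \<gamma> * real n * norm (V s)))"
    proof (intro mult_left_mono sum_mono)
      fix t assume "t \<in> {..<n}"
      hence tn: "t < n" by simp
      have "norm (g (\<pi> s t) (w s) - g (\<pi> s t) (x s t)) \<le> L * norm (w s - x s t)"
        using lip[OF pin[OF tn]] .
      also have "\<dots> \<le> L * (2 * \<gamma> * real n * norm (V s))"
        using bndn[of t s] tn L by (intro mult_left_mono) (auto simp: norm_minus_commute)
      finally show "norm (g (\<pi> s t) (w s) - g (\<pi> s t) (x s t)) \<le> L * (2 * \<gamma> * real n * norm (V s))" .
    qed auto
    also have "\<dots> = 2 * L * \<gamma> * real n * norm (V s)" using n by simp
    finally show ?thesis .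
  qed
  have nb: "norm b \<le> 4 * L * \<gamma> * real n * norm (V p)"
  proof -
    have "norm b = (1 / real n) * norm (\<Sum>t<n. g (\<pi> p t) (x p n) - g (\<pi> p t) (x p t))"
      unfolding b_def by simp
    also have "\<dots> \<le> (1 / real n) * (\<Sum>t<n. norm (g (\<pi> p t) (x p n) - g (\<pi> p t) (x p t)))"
      by (intro mult_left_mono norm_sum) auto
    also have "\<dots> \<le> (1 / real n) * (\<Sum>t<n. L * (4 * \<gamma> * real n * norm (V p)))"
    proof (intro mult_left_mono sum_mono)
      fix t assume "t \<in> {..<n}"
      hence tn: "t < n" by simp
      have "norm (g (\<pi> p t) (x p n) - g (\<pi> p t) (x p t)) \<le> L * norm (x p n - x p t)"
        using lip[OF pin[OF tn]] .
      also have "norm (x p n - x p t) \<le> norm (x p n - w p) + norm (x p t - w p)"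
        using norm_triangle_ineq4[of "x p n - w p" "x p t - w p"] by simp
      also have "\<dots> \<le> 4 * \<gamma> * real n * norm (V p)"
        using bndn[of n p] bndn[of t p] tn by simp
      finally show "norm (g (\<pi> p t) (x p n) - g (\<pi> p t) (x p t)) \<le> L * (4 * \<gamma> * real n * norm (V p))"
        using L by (simp add: mult_left_mono)
    qed auto
    also have "\<dots> = 4 * L * \<gamma> * real n * norm (V p)" using n by simp
    finally show ?thesis .
  qed
  have "(norm (a + b))\<^sup>2 \<le> (norm a + norm b)\<^sup>2"
    by (intro power_mono norm_triangle_ineq) auto
  also have "\<dots> \<le> 2 * (norm a)\<^sup>2 + 2 * (norm b)\<^sup>2"
    by (smt (verit) sum_squares_bound power2_sum)
  also have "\<dots> \<le> 2 * (2 * L * \<gamma> * real n * norm (V s))\<^sup>2 + 2 * (4 * L * \<gamma> * real n * norm (V p))\<^sup>2"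
    using na nb by (intro add_mono mult_left_mono power_mono) auto
  also have "\<dots> = 8 * \<gamma>\<^sup>2 * L\<^sup>2 * (real n)\<^sup>2 * (norm (V s))\<^sup>2
           + 32 * \<gamma>\<^sup>2 * L\<^sup>2 * (real n)\<^sup>2 * (norm (V (s - 1)))\<^sup>2"
    using sp by (simp add: power_mult_distrib)
  finally show ?thesis using eq by simp
qed

end
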